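(* Let $V=V_0+V_1$ with $V_0\in L^\infty(\mathbb{R})$, $\operatorname{ess\,inf}V_0>0$, and $V_1\in\mathcal{M}_1(\mathbb{R})$. Then the function $a\mapsto F(a;V)$ is continuous on $\mathbb{R}$.
   Context: Elements of $H^1(\mathbb{R})$ are identified with their continuous representatives; $\|u\|_\infty:=\|u\|_{L^\infty(\mathbb{R})}$. $\mathcal{M}_1(\mathbb{R})$ is the set of signed Radon measures on $\mathbb{R}$ with finite total variation. The potential $V=V_0+V_1$ acts as the bilinear form $V(u,v):=\int_{\mathbb{R}}V_0uv\,dx+\int_{\mathbb{R}}uv\,dV_1$ on $H^1(\mathbb{R})$, and $I(u;V):=\|u'\|_{L^2(\mathbb{R})}^2+V(u,u)$. For $a\in\mathbb{R}$, $K_a:=\{u\in H^1(\mathbb{R}):u(a)=\|u\|_\infty=1\}$ and $F(a;V):=\inf_{u\in K_a}I(u;V)$. *)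

theory Defs
  imports "HOL-Analysis.Analysis"
begin

definition weak_deriv :: "(real \<Rightarrow> real) \<Rightarrow> (real \<Rightarrow> real) \<Rightarrow> bool" where
  "weak_deriv u g \<longleftrightarrow> g \<in> borel_measurable borel \<and>
     (\<forall>x y. x \<le> y \<longrightarrow> set_integrable lborel {x..y} g \<and>
        u y - u x = (LINT t:{x..y}|lborel. g t))"

text \<open>The Sobolev space H^1(R), elements identified with continuous representatives.\<close>
definition H1 :: "(real \<Rightarrow> real) set" where
  "H1 = {u. u \<in> borel_measurable borel \<and> integrable lborel (\<lambda>x. (u x)\<^sup>2) \<and>
            (\<exists>g. weak_deriv u g \<and> integrable lborel (\<lambda>x. (g x)\<^sup>2))}"

text \<open>The (a.e. unique) L^2 weak derivative u'.\<close>
definition wderiv :: "(real \<Rightarrow> real) \<Rightarrow> (real \<Rightarrow> real)" where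
  "wderiv u = (SOME g. weak_deriv u g \<and> integrable lborel (\<lambda>x. (g x)\<^sup>2))"

text \<open>The signed finite measure V1 is given by its Jordan decomposition V1 = M1 - M2,
  M1, M2 finite Borel measures on R.  The bilinear form
  V(u,v) = int V0 u v dx + int u v dV1.\<close>
definition Vform :: "(real \<Rightarrow> real) \<Rightarrow> real measure \<Rightarrow> real measure
                     \<Rightarrow> (real \<Rightarrow> real) \<Rightarrow> (real \<Rightarrow> real) \<Rightarrow> real" where
  "Vform V0 M1 M2 u v = (\<integral>x. V0 x * u x * v x \<partial>lborel)
      + ((\<integral>x. u x * v x \<partial>M1) - (\<integral>x. u x * v x \<partial>M2))"

definition Ifun :: "(real \<Rightarrow> real) \<Rightarrow> (real \<Rightarrow> real) \<Rightarrow> real measure \<Rightarrow> real measure \<Rightarrow> real" where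
  "Ifun u V0 M1 M2 = (\<integral>x. (wderiv u x)\<^sup>2 \<partial>lborel) + Vform V0 M1 M2 u u"

text \<open>K_a = {u in H1 : u(a) = ||u||_inf = 1}; for continuous u the L^inf norm is the sup norm.\<close>
definition Kset :: "real \<Rightarrow> (real \<Rightarrow> real) set" where
  "Kset a = {u \<in> H1. u a = 1 \<and> (\<forall>x. \<bar>u x\<bar> \<le> 1)}"

definition Ffun :: "real \<Rightarrow> (real \<Rightarrow> real) \<Rightarrow> real measure \<Rightarrow> real measure \<Rightarrow> real" where
  "Ffun a V0 M1 M2 = (INF u\<in>Kset a. Ifun u V0 M1 M2)"

end

theory Submission
  imports Defs
begin

definition wd_on :: "(real \<Rightarrow> real) \<Rightarrow> (real \<Rightarrow> real) \<Rightarrow> real set \<Rightarrow> bool" where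
  "wd_on u g S \<longleftrightarrow> (\<forall>x y. x \<le> y \<longrightarrow> {x..y} \<subseteq> S \<longrightarrow>
      set_integrable lborel {x..y} g \<and> u y - u x = (LINT t:{x..y}|lborel. g t))"

lemma weak_deriv_wd_on: "weak_deriv u g \<longleftrightarrow> g \<in> borel_measurable borel \<and> wd_on u g UNIV"
  unfolding weak_deriv_def wd_on_def by auto

lemma wd_on_glue:
  assumes A: "wd_on u g A" and B: "wd_on u g B"
    and le: "\<And>x. x \<in> A \<Longrightarrow> x \<le> c" and ge: "\<And>x. x \<in> B \<Longrightarrow> c \<le> x"
    and cA: "c \<in> A" and cB: "c \<in> B"
  shows "wd_on u g (A \<union> B)"
  unfolding wd_on_def
proof (intro allI impI)
  fix x y :: real assume xy: "x \<le> y" and sub: "{x..y} \<subseteq> A \<union> B"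
  show "set_integrable lborel {x..y} g \<and> u y - u x = (LINT t:{x..y}|lborel. g t)"
  proof (cases "y \<le> c")
    case True
    have "{x..y} \<subseteq> A"
    proof
      fix z assume z: "z \<in> {x..y}"
      then consider "z \<in> A" | "z \<in> B" using sub by blast
      then show "z \<in> A"
      proof cases
        case 2 then have "c \<le> z" using ge by auto
        with z True have "z = c" by auto
        then show ?thesis using cA by simp
      qed
    qed
    then show ?thesis using A xy unfolding wd_on_def by blast
  next
    case False note yc = this
    show ?thesis
    proof (cases "c \<le> x")
      case True
      have "{x..y} \<subseteq> B"
      proof
        fix z assume z: "z \<in> {x..y}"
        then consider "z \<in> A" | "z \<in> B" using sub by blast
        then show "z \<in> B"
        proof cases
          case 1 then have "z \<le> c" using le by auto
          with z True have "z = c" by auto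
          then show ?thesis using cB by simp
        qed
      qed
      then show ?thesis using B xy unfolding wd_on_def by blast
    next
      case False
      have s1: "{x..c} \<subseteq> A"
      proof
        fix z assume z: "z \<in> {x..c}"
        then have "z \<in> {x..y}" using yc by auto
        then have "z \<in> A \<union> B" using sub by blast
        then consider "z \<in> A" | "z \<in> B" by blast
        then show "z \<in> A"
        proof cases
          case 2 then have "c \<le> z" using ge by auto
          with z have "z = c" by auto
          then show ?thesis using cA by simp
        qed
      qed
      have s2: "{c..y} \<subseteq> B"
      proof
        fix z assume z: "z \<in> {c..y}"
        then have "z \<in> {x..y}" using False by auto
        then have "z \<in> A \<union> B" using sub by blast
        then consider "z \<in> A" | "z \<in> B" by blast
        then show "z \<in> B"
        proof cases
          case 1 then have "z \<le> c" using le by auto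
          with z have "z = c" by auto
          then show ?thesis using cB by simp
        qed
      qed
      have xc: "x \<le> c" "c \<le> y" using False yc by auto
      have i1: "set_integrable lborel {x..c} g" "u c - u x = (LINT t:{x..c}|lborel. g t)"
        using A s1 xc unfolding wd_on_def by blast+
      have i2: "set_integrable lborel {c..y} g" "u y - u c = (LINT t:{c..y}|lborel. g t)"
        using B s2 xc unfolding wd_on_def by blast+
      have un: "{x..y} = {x..c} \<union> {c..y}" using xc by auto
      have ae: "AE t in lborel. \<not> (t \<in> {x..c} \<and> t \<in> {c..y})"
        using AE_lborel_singleton[of c] by eventually_elim auto
      have "set_integrable lborel {x..y} g"
        unfolding un by (rule set_integrable_Un[OF i1(1) i2(1)]) auto
      moreover have "(LINT t:{x..y}|lborel. g t) = (LINT t:{x..c}|lborel. g t) + (LINT t:{c..y}|lborel. g t)"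
        unfolding un by (rule set_integral_Un_AE[OF ae _ _ i1(1) i2(1)]) auto
      ultimately show ?thesis using i1(2) i2(2) by simp
    qed
  qed
qed

lemma wd_on_cong:
  assumes W: "wd_on u g S" and eu: "\<And>x. x \<in> S \<Longrightarrow> u' x = u x"
    and eg: "\<And>x. x \<in> S \<Longrightarrow> x \<notin> N \<Longrightarrow> g' x = g x" and N: "finite N"
    and mg: "g \<in> borel_measurable borel" and mg': "g' \<in> borel_measurable borel"
  shows "wd_on u' g' S"
  unfolding wd_on_def
proof (intro allI impI)
  fix x y :: real assume xy: "x \<le> y" and sub: "{x..y} \<subseteq> S"
  have i: "set_integrable lborel {x..y} g" "u y - u x = (LINT t:{x..y}|lborel. g t)"
    using W xy sub unfolding wd_on_def by blast+
  have aeN: "AE t in lborel. t \<notin> N"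
    using N by (rule finite_imp_null_set_lborel[THEN AE_not_in])
  have ae: "AE t\<in>{x..y} in lborel. g' t = g t"
    using aeN by eventually_elim (use sub eg in auto)
  have mgl: "g \<in> borel_measurable lborel" "g' \<in> borel_measurable lborel" using mg mg' by auto
  have "set_integrable lborel {x..y} g' = set_integrable lborel {x..y} g"
    by (rule set_integrable_cong_AE[OF mgl(2) mgl(1) ae]) auto
  moreover have "(LINT t:{x..y}|lborel. g' t) = (LINT t:{x..y}|lborel. g t)"
    by (rule set_lebesgue_integral_cong_AE[OF _ mgl(2) mgl(1) ae]) auto
  moreover have "u' y - u' x = u y - u x"
  proof -
    have "x \<in> S" "y \<in> S" using sub xy by auto
    then show ?thesis using eu by simp
  qed
  ultimately show "set_integrable lborel {x..y} g' \<and> u' y - u' x = (LINT t:{x..y}|lborel. g' t)"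
    using i by simp
qed

lemma wd_on_mono: "wd_on u g S \<Longrightarrow> T \<subseteq> S \<Longrightarrow> wd_on u g T"
  unfolding wd_on_def by blast

lemma wd_affine:
  assumes W: "wd_on u g UNIV" and mg: "g \<in> borel_measurable borel" and al: "\<alpha> > 0"
  shows "wd_on (\<lambda>x. u (\<alpha>*x+\<beta>)) (\<lambda>x. \<alpha> * g (\<alpha>*x+\<beta>)) UNIV"
  unfolding wd_on_def
proof (intro allI impI)
  fix x y :: real assume xy: "x \<le> y" and "{x..y} \<subseteq> (UNIV::real set)"
  define X where "X = \<alpha>*x+\<beta>"
  define Y where "Y = \<alpha>*y+\<beta>"
  have XY: "X \<le> Y" using xy al unfolding X_def Y_def by (simp add: mult_left_mono)
  have i: "set_integrable lborel {X..Y} g" "u Y - u X = (LINT t:{X..Y}|lborel. g t)"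
    using W XY unfolding wd_on_def by blast+
  define f where "f t = indicator {X..Y} t * g t" for t
  have fi: "integrable lborel f" using i(1) unfolding set_integrable_def f_def by simp
  have fs: "f (\<beta> + \<alpha> * w) = indicator {x..y} w * g (\<alpha>*w+\<beta>)" for w
  proof -
    have "(\<beta> + \<alpha> * w \<in> {X..Y}) = (w \<in> {x..y})"
      using al unfolding X_def Y_def by (auto simp: algebra_simps mult_le_cancel_left_pos)
    then show ?thesis unfolding f_def by (auto simp: indicator_def algebra_simps)
  qed
  have fi2: "integrable lborel (\<lambda>w. f (\<beta> + \<alpha> * w))"
    using lborel_integrable_real_affine_iff[of \<alpha> f \<beta>] fi al by simp
  have fi3: "integrable lborel (\<lambda>w. indicator {x..y} w * g (\<alpha>*w+\<beta>))"
    using fi2 unfolding fs .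
  show "set_integrable lborel {x..y} (\<lambda>x. \<alpha> * g (\<alpha>*x+\<beta>)) \<and>
        u (\<alpha>*y+\<beta>) - u (\<alpha>*x+\<beta>) = (LINT t:{x..y}|lborel. \<alpha> * g (\<alpha>*t+\<beta>))"
  proof
    show "set_integrable lborel {x..y} (\<lambda>x. \<alpha> * g (\<alpha>*x+\<beta>))"
      unfolding set_integrable_def using integrable_mult_right[OF fi3, of \<alpha>]
      by (simp add: algebra_simps)
    have "u (\<alpha>*y+\<beta>) - u (\<alpha>*x+\<beta>) = integral\<^sup>L lborel f"
      using i(2) unfolding X_def Y_def f_def set_lebesgue_integral_def by simp
    also have "\<dots> = \<bar>\<alpha>\<bar> *\<^sub>R integral\<^sup>L lborel (\<lambda>w. f (\<beta> + \<alpha> * w))"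
      using al by (intro lborel_integral_real_affine) simp
    also have "\<dots> = \<alpha> * integral\<^sup>L lborel (\<lambda>w. indicator {x..y} w * g (\<alpha>*w+\<beta>))"
      using al unfolding fs by simp
    also have "\<dots> = (LINT t:{x..y}|lborel. \<alpha> * g (\<alpha>*t+\<beta>))"
      unfolding set_lebesgue_integral_def by (simp add: algebra_simps)
    finally show "u (\<alpha>*y+\<beta>) - u (\<alpha>*x+\<beta>) = (LINT t:{x..y}|lborel. \<alpha> * g (\<alpha>*t+\<beta>))" .
  qed
qed

lemma wd_linear:
  shows "wd_on (\<lambda>x. p*x+q) (\<lambda>x. p) UNIV"
  unfolding wd_on_def
proof (intro allI impI conjI)
  fix x y :: real assume xy: "x \<le> y"
  have fin: "emeasure lborel {x..y} \<noteq> \<infinity>" by (simp add: emeasure_lborel_Icc_eq)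
  show "set_integrable lborel {x..y} (\<lambda>x. p)"
  proof -
    have "integrable lborel (indicat_real {x..y})"
      using fin by (simp add: integrable_indicator_iff less_top)
    then have "integrable lborel (\<lambda>t. indicat_real {x..y} t * p)" by (rule integrable_mult_left)
    then show ?thesis unfolding set_integrable_def by simp
  qed
  show "p*y+q - (p*x+q) = (LINT t:{x..y}|lborel. p)"
    using xy by (simp add: set_integral_const measure_lborel_Icc algebra_simps)
qed

lemma Ioc_Icc_int:
  fixes f :: "real \<Rightarrow> real"
  assumes i: "\<And>a b. a \<le> b \<Longrightarrow> set_integrable lborel {a..b} f" and mf: "f \<in> borel_measurable borel"
  shows "set_integrable lborel {a<..b} f \<and> (a \<le> b \<longrightarrow> (LINT x:{a<..b}|lborel. f x) = (LINT x:{a..b}|lborel. f x))"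
proof (cases "a \<le> b")
  case True
  have si: "set_integrable lborel {a<..b} f"
    by (rule set_integrable_subset[OF i[OF True]]) auto
  have ae: "AE x in lborel. (x \<in> {a..b}) = (x \<in> {a<..b})"
    using AE_lborel_singleton[of a] by eventually_elim auto
  have "(LINT x:{a<..b}|lborel. f x) = (LINT x:{a..b}|lborel. f x)"
    by (rule set_integral_cong_set)
      (use ae mf in \<open>auto simp: set_borel_measurable_def\<close>)
  then show ?thesis using si by simp
next
  case False
  then have "{a<..b} = {}" by auto
  then show ?thesis using False by simp
qed

lemma wd_unique:
  assumes W1: "weak_deriv u g1" and W2: "weak_deriv u g2"
  shows "AE x in lborel. g1 x = g2 x"
proof -
  have m1[measurable]: "g1 \<in> borel_measurable borel" and m2[measurable]: "g2 \<in> borel_measurable borel"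
    using W1 W2 unfolding weak_deriv_def by auto
  define f where "f x = g1 x - g2 x" for x
  define p where "p x = max (f x) 0" for x
  define q where "q x = max (- f x) 0" for x
  have mf[measurable]: "f \<in> borel_measurable borel" unfolding f_def by measurable
  have mp[measurable]: "p \<in> borel_measurable borel" unfolding p_def by measurable
  have mq[measurable]: "q \<in> borel_measurable borel" unfolding q_def by measurable
  have fi: "set_integrable lborel {a..b} f \<and> (LINT x:{a..b}|lborel. f x) = 0" if "a \<le> b" for a b
  proof -
    have i1: "set_integrable lborel {a..b} g1" "u b - u a = (LINT t:{a..b}|lborel. g1 t)"
      using W1 that unfolding weak_deriv_def by auto
    have i2: "set_integrable lborel {a..b} g2" "u b - u a = (LINT t:{a..b}|lborel. g2 t)"
      using W2 that unfolding weak_deriv_def by auto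
    show ?thesis unfolding f_def using i1 i2 by (simp add: set_integral_diff)
  qed
  have pqi: "set_integrable lborel {a..b} p \<and> set_integrable lborel {a..b} q \<and>
      (LINT x:{a..b}|lborel. p x) = (LINT x:{a..b}|lborel. q x)" if "a \<le> b" for a b
  proof -
    have fa: "set_integrable lborel {a..b} f" "set_integrable lborel {a..b} (\<lambda>x. \<bar>f x\<bar>)"
      using fi[OF that] set_integrable_abs by auto
    have pe: "p = (\<lambda>x. (1/2) * (\<bar>f x\<bar> + f x))" "q = (\<lambda>x. (1/2) * (\<bar>f x\<bar> - f x))"
      unfolding p_def q_def by (auto simp: fun_eq_iff max_def)
    have ip: "set_integrable lborel {a..b} p" "set_integrable lborel {a..b} q"
      unfolding pe using fa by (auto intro!: set_integrable_mult_right set_integral_add(1) set_integral_diff(1))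
    have "(LINT x:{a..b}|lborel. p x) - (LINT x:{a..b}|lborel. q x) = (LINT x:{a..b}|lborel. p x - q x)"
      using ip by (simp add: set_integral_diff)
    also have "(\<lambda>x. p x - q x) = f" unfolding p_def q_def by (auto simp: fun_eq_iff max_def)
    finally show ?thesis using fi[OF that] ip by simp
  qed
  have pqI: "set_integrable lborel {a<..b} p \<and> set_integrable lborel {a<..b} q \<and>
      (LINT x:{a<..b}|lborel. p x) = (LINT x:{a<..b}|lborel. q x)" for a b
  proof -
    have A: "set_integrable lborel {a<..b} p \<and> (a \<le> b \<longrightarrow> (LINT x:{a<..b}|lborel. p x) = (LINT x:{a..b}|lborel. p x))"
      by (rule Ioc_Icc_int) (use pqi mp in auto)
    have B: "set_integrable lborel {a<..b} q \<and> (a \<le> b \<longrightarrow> (LINT x:{a<..b}|lborel. q x) = (LINT x:{a..b}|lborel. q x))"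
      by (rule Ioc_Icc_int) (use pqi mq in auto)
    show ?thesis
    proof (cases "a \<le> b")
      case True then show ?thesis using A B pqi[OF True] by simp
    next
      case False then have "{a<..b} = {}" by auto
      then show ?thesis by (simp add: set_lebesgue_integral_def)
    qed
  qed
  have AEn: "AE x in lborel. indicator {-real n<..real n} x * p x = indicator {-real n<..real n} x * q x" for n :: nat
  proof -
    define P where "P x = ennreal (indicator {-real n<..real n} x * p x)" for x
    define Q where "Q x = ennreal (indicator {-real n<..real n} x * q x)" for x
    have [measurable]: "P \<in> borel_measurable borel" "Q \<in> borel_measurable borel"
      unfolding P_def Q_def by measurable
    have em: "emeasure (density lborel P) {s<..} = ennreal (LINT x:{max s (-real n)<..real n}|lborel. p x)
       \<and> emeasure (density lborel Q) {s<..} = ennreal (LINT x:{max s (-real n)<..real n}|lborel. q x)" for s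
    proof -
      have ind: "indicator {-real n<..real n} x * indicator {s<..} x = (indicator {max s (-real n)<..real n} x :: real)" for x
        by (auto simp: indicator_def)
      have "emeasure (density lborel P) {s<..} = (\<integral>\<^sup>+x. P x * indicator {s<..} x \<partial>lborel)"
        by (simp add: emeasure_density)
      also have "\<dots> = (\<integral>\<^sup>+x. ennreal (indicator {max s (-real n)<..real n} x * p x) \<partial>lborel)"
        by (rule nn_integral_cong) (auto simp: P_def indicator_def)
      also have "\<dots> = ennreal (LINT x:{max s (-real n)<..real n}|lborel. p x)"
        unfolding set_lebesgue_integral_def real_scaleR_def
        by (rule nn_integral_eq_integral) (use pqI in \<open>auto simp: set_integrable_def p_def\<close>)
      finally have 1: "emeasure (density lborel P) {s<..} = ennreal (LINT x:{max s (-real n)<..real n}|lborel. p x)" .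
      have "emeasure (density lborel Q) {s<..} = (\<integral>\<^sup>+x. Q x * indicator {s<..} x \<partial>lborel)"
        by (simp add: emeasure_density)
      also have "\<dots> = (\<integral>\<^sup>+x. ennreal (indicator {max s (-real n)<..real n} x * q x) \<partial>lborel)"
        by (rule nn_integral_cong) (auto simp: Q_def indicator_def)
      also have "\<dots> = ennreal (LINT x:{max s (-real n)<..real n}|lborel. q x)"
        unfolding set_lebesgue_integral_def real_scaleR_def
        by (rule nn_integral_eq_integral) (use pqI in \<open>auto simp: set_integrable_def q_def\<close>)
      finally show ?thesis using 1 by simp
    qed
    have "density lborel P = density lborel Q"
      by (rule measure_eqI_lessThan) (use em pqI in auto)
    then have "AE x in lborel. P x = Q x"
      by (intro sigma_finite_measure.density_unique[OF sigma_finite_lborel]) auto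
    then show ?thesis
      by eventually_elim (auto simp: P_def Q_def p_def q_def indicator_def)
  qed
  have "AE x in lborel. \<forall>n::nat. indicator {-real n<..real n} x * p x = indicator {-real n<..real n} x * q x"
    using AEn by (subst AE_all_countable) blast
  then show ?thesis
  proof eventually_elim
    case (elim x)
    obtain n :: nat where n: "\<bar>x\<bar> < real n" using reals_Archimedean2 by blast
    then have "x \<in> {-real n<..real n}" by auto
    then have "p x = q x" using elim[rule_format, of n] by simp
    then show ?case unfolding p_def q_def f_def by (auto simp: max_def split: if_splits)
  qed
qed

lemma wderiv_prop:
  assumes "u \<in> H1"
  shows "weak_deriv u (wderiv u)" "integrable lborel (\<lambda>x. (wderiv u x)\<^sup>2)"
proof -
  have "\<exists>g. weak_deriv u g \<and> integrable lborel (\<lambda>x. (g x)\<^sup>2)" using assms unfolding H1_def by auto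
  then have "weak_deriv u (wderiv u) \<and> integrable lborel (\<lambda>x. (wderiv u x)\<^sup>2)"
    unfolding wderiv_def by (rule someI_ex)
  then show "weak_deriv u (wderiv u)" "integrable lborel (\<lambda>x. (wderiv u x)\<^sup>2)" by auto
qed

lemma wderiv_sq_eq:
  assumes "u \<in> H1" "weak_deriv u g"
  shows "(\<integral>x. (wderiv u x)\<^sup>2 \<partial>lborel) = (\<integral>x. (g x)\<^sup>2 \<partial>lborel)"
proof -
  have "AE x in lborel. wderiv u x = g x" by (rule wd_unique[OF wderiv_prop(1)[OF assms(1)] assms(2)])
  then show ?thesis by (intro integral_cong_AE) (use assms wderiv_prop[OF assms(1)] in \<open>auto simp: weak_deriv_def\<close>)
qed

lemma holder_bound:
  assumes W: "weak_deriv u g" and gi: "integrable lborel (\<lambda>x. (g x)\<^sup>2)"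
    and G: "(\<integral>x. (g x)\<^sup>2 \<partial>lborel) \<le> G" and e: "\<epsilon> > 0" and xy: "x \<le> y"
  shows "\<bar>u y - u x\<bar> \<le> G/(2*\<epsilon>) + \<epsilon>*(y-x)/2"
proof -
  have mg[measurable]: "g \<in> borel_measurable borel" using W unfolding weak_deriv_def by auto
  have i: "set_integrable lborel {x..y} g" "u y - u x = (LINT t:{x..y}|lborel. g t)"
    using W xy unfolding weak_deriv_def by auto
  define I where "I t = indicat_real {x..y} t" for t
  have Ii: "integrable lborel I"
    unfolding I_def by (simp add: integrable_indicator_iff emeasure_lborel_Icc_eq less_top[symmetric])
  have gI: "integrable lborel (\<lambda>t. I t * g t)" using i(1) unfolding set_integrable_def I_def by simp
  have g2I: "integrable lborel (\<lambda>t. I t * (g t)\<^sup>2)"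
    by (rule Bochner_Integration.integrable_bound[OF gi]) (auto simp: I_def indicator_def)
  have pw: "\<bar>g t\<bar> \<le> (g t)\<^sup>2/(2*\<epsilon>) + \<epsilon>/2" for t
  proof -
    have "0 \<le> (\<bar>g t\<bar> - \<epsilon>)\<^sup>2" by simp
    then have "2*\<epsilon>*\<bar>g t\<bar> \<le> (g t)\<^sup>2 + \<epsilon>*\<epsilon>" by (simp add: power2_eq_square algebra_simps)
    then show ?thesis using e by (simp add: field_simps)
  qed
  have "\<bar>u y - u x\<bar> = \<bar>\<integral>t. I t * g t \<partial>lborel\<bar>"
    using i(2) unfolding set_lebesgue_integral_def I_def by simp
  also have "\<dots> \<le> (\<integral>t. \<bar>I t * g t\<bar> \<partial>lborel)" by (rule integral_abs_bound)
  also have "\<dots> \<le> (\<integral>t. (1/(2*\<epsilon>)) * (I t * (g t)\<^sup>2) + (\<epsilon>/2) * I t \<partial>lborel)"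
  proof (rule integral_mono)
    show "integrable lborel (\<lambda>t. \<bar>I t * g t\<bar>)" using gI by simp
    show "integrable lborel (\<lambda>t. (1/(2*\<epsilon>)) * (I t * (g t)\<^sup>2) + (\<epsilon>/2) * I t)"
      using g2I Ii by simp
    fix t show "\<bar>I t * g t\<bar> \<le> (1/(2*\<epsilon>)) * (I t * (g t)\<^sup>2) + (\<epsilon>/2) * I t"
      using pw[of t] by (auto simp: I_def indicator_def)
  qed
  also have "\<dots> = (1/(2*\<epsilon>)) * (\<integral>t. I t * (g t)\<^sup>2 \<partial>lborel) + (\<epsilon>/2) * (\<integral>t. I t \<partial>lborel)"
    using g2I Ii by simp
  also have "(\<integral>t. I t \<partial>lborel) = y - x"
    unfolding I_def using xy by (simp add: measure_lborel_Icc)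
  also have "(\<integral>t. I t * (g t)\<^sup>2 \<partial>lborel) \<le> G"
  proof -
    have "(\<integral>t. I t * (g t)\<^sup>2 \<partial>lborel) \<le> (\<integral>t. (g t)\<^sup>2 \<partial>lborel)"
      by (rule integral_mono[OF g2I gi]) (auto simp: I_def indicator_def)
    then show ?thesis using G by simp
  qed
  then have "(1/(2*\<epsilon>)) * (\<integral>t. I t * (g t)\<^sup>2 \<partial>lborel) \<le> (1/(2*\<epsilon>)) * G"
    using e by (intro mult_left_mono) auto
  then have "(1/(2*\<epsilon>)) * (\<integral>t. I t * (g t)\<^sup>2 \<partial>lborel) + (\<epsilon>/2) * (y - x) \<le> G/(2*\<epsilon>) + \<epsilon>*(y-x)/2"
    by simp
  finally show ?thesis .
qed

lemma affine_int:
  fixes F :: "real \<Rightarrow> real"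
  assumes F: "integrable lborel F" and al: "\<alpha> > 0"
  shows "integrable lborel (\<lambda>x. F (\<alpha>*x+\<beta>)) \<and> (\<integral>x. F (\<alpha>*x+\<beta>) \<partial>lborel) = (1/\<alpha>) * (\<integral>x. F x \<partial>lborel)"
proof -
  have e: "(\<lambda>x. F (\<alpha>*x+\<beta>)) = (\<lambda>x. F (\<beta>+\<alpha>*x))" by (simp add: add.commute)
  have "integrable lborel (\<lambda>x. F (\<beta>+\<alpha>*x))"
    using lborel_integrable_real_affine_iff[of \<alpha> F \<beta>] F al by simp
  moreover have "(\<integral>x. F x \<partial>lborel) = \<alpha> * (\<integral>x. F (\<beta>+\<alpha>*x) \<partial>lborel)"
    using lborel_integral_real_affine[of \<alpha> F \<beta>] al by simp
  ultimately show ?thesis unfolding e using al by (simp add: field_simps)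
qed

lemma hmove1:
  fixes d t :: real
  assumes "\<bar>d\<bar> \<le> 1/2" "0 \<le> t" "t \<le> 1 + d"
  shows "\<bar>(1/(1+d))*t - t\<bar> \<le> \<bar>d\<bar>"
proof -
  have p: "1 + d > 0" using assms by auto
  have "(1/(1+d))*t - t = - d * (t/(1+d))" using p by (simp add: field_simps)
  moreover have s: "0 \<le> t/(1+d)" "t/(1+d) \<le> 1" using p assms by (auto simp: divide_le_eq)
  moreover have "\<bar>- d * (t/(1+d))\<bar> = \<bar>d\<bar> * (t/(1+d))" using s p assms(2) by (simp add: abs_mult)
  moreover have "\<bar>d\<bar> * (t/(1+d)) \<le> \<bar>d\<bar>" using s mult_left_le[of "t/(1+d)" "\<bar>d\<bar>"] mult_left_le[of "t/(1-d)" "\<bar>d\<bar>"] by (simp del: times_divide_eq_right)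
  ultimately show ?thesis by simp
qed

lemma hmove2:
  fixes d t :: real
  assumes "\<bar>d\<bar> \<le> 1/2" "0 \<le> t" "t \<le> 1 - d"
  shows "\<bar>(1/(1-d))*t - t\<bar> \<le> \<bar>d\<bar>"
proof -
  have p: "1 - d > 0" using assms by auto
  have "(1/(1-d))*t - t = d * (t/(1-d))" using p by (simp add: field_simps)
  moreover have s: "0 \<le> t/(1-d)" "t/(1-d) \<le> 1" using p assms by (auto simp: divide_le_eq)
  moreover have "\<bar>d * (t/(1-d))\<bar> = \<bar>d\<bar> * (t/(1-d))" using s p assms(2) by (simp add: abs_mult)
  moreover have "\<bar>d\<bar> * (t/(1-d)) \<le> \<bar>d\<bar>" using s mult_left_le[of "t/(1+d)" "\<bar>d\<bar>"] mult_left_le[of "t/(1-d)" "\<bar>d\<bar>"] by (simp del: times_divide_eq_right)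
  ultimately show ?thesis by simp
qed

lemma aff_mem:
  fixes \<alpha> y x p q p' q' :: real
  assumes al: "\<alpha> > 0" and e1: "y - p = \<alpha>*(x - p')" and e2: "q - y = \<alpha>*(q' - x)"
  shows "(y \<in> {p<..q}) = (x \<in> {p'<..q'})"
proof -
  have 1: "(p < y) = (0 < \<alpha>*(x - p'))" using e1 by linarith
  have 2: "(y \<le> q) = (0 \<le> \<alpha>*(q' - x))" using e2 by linarith
  have 3: "(0 < \<alpha>*(x - p')) = (p' < x)" using al by (simp add: zero_less_mult_iff)
  have 4: "(0 \<le> \<alpha>*(q' - x)) = (x \<le> q')" using al by (simp add: zero_le_mult_iff)
  show ?thesis using 1 2 3 4 by auto
qed

lemma construct:
  assumes uK: "u \<in> Kset a" and db: "\<bar>b - a\<bar> \<le> 1/2"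
  shows "\<exists>v \<in> Kset b. (\<integral>x. (wderiv v x)\<^sup>2 \<partial>lborel) \<le> (1/(1-\<bar>b-a\<bar>)) * (\<integral>x. (wderiv u x)\<^sup>2 \<partial>lborel)
     \<and> (\<forall>x. x \<notin> {a-1..a+1} \<longrightarrow> v x = u x) \<and> (\<forall>x. \<exists>y. \<bar>y - x\<bar> \<le> \<bar>b-a\<bar> \<and> v x = u y)"
proof -
  define d where "d = b - a"
  have uH: "u \<in> H1" and ua: "u a = 1" and ub: "\<And>x. \<bar>u x\<bar> \<le> 1" using uK unfolding Kset_def by auto
  have mu[measurable]: "u \<in> borel_measurable borel" using uH unfolding H1_def by auto
  have u2: "integrable lborel (\<lambda>x. (u x)\<^sup>2)" using uH unfolding H1_def by auto
  define g where "g = wderiv u"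
  have W: "weak_deriv u g" and gi: "integrable lborel (\<lambda>x. (g x)\<^sup>2)"
    using wderiv_prop[OF uH] unfolding g_def by auto
  have mg[measurable]: "g \<in> borel_measurable borel" using W unfolding weak_deriv_def by auto
  have Wu: "wd_on u g UNIV" using W weak_deriv_wd_on by auto
  have dd: "\<bar>d\<bar> \<le> 1/2" using db unfolding d_def by simp
  have p1: "1 + d > 0" and p2: "1 - d > 0" using dd by auto
  define \<alpha>1 where "\<alpha>1 = 1/(1+d)"
  define \<alpha>2 where "\<alpha>2 = 1/(1-d)"
  define \<beta>1 where "\<beta>1 = (a-1) - \<alpha>1*(a-1)"
  define \<beta>2 where "\<beta>2 = a - \<alpha>2*b"
  have a1: "\<alpha>1 > 0" and a2: "\<alpha>2 > 0" unfolding \<alpha>1_def \<alpha>2_def using p1 p2 by auto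
  have id1: "\<alpha>1*x+\<beta>1 - (a-1) = \<alpha>1*(x - (a-1))" for x unfolding \<beta>1_def by (simp add: algebra_simps)
  have e1: "\<alpha>1 * (1+d) = 1" unfolding \<alpha>1_def using p1 by simp
  have e2: "\<alpha>2 * (1-d) = 1" unfolding \<alpha>2_def using p2 by simp
  have id2: "a - (\<alpha>1*x+\<beta>1) = \<alpha>1*(b - x)" for x
  proof -
    have "a - (\<alpha>1*x+\<beta>1) = 1 - \<alpha>1*(1+d) + \<alpha>1*(b - x)" by (simp add: \<beta>1_def d_def algebra_simps)
    then show ?thesis using e1 by simp
  qed
  have id3: "\<alpha>2*x+\<beta>2 - a = \<alpha>2*(x - b)" for x unfolding \<beta>2_def by (simp add: algebra_simps)
  have id4: "(a+1) - (\<alpha>2*x+\<beta>2) = \<alpha>2*(a+1 - x)" for x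
  proof -
    have "(a+1) - (\<alpha>2*x+\<beta>2) = 1 - \<alpha>2*(1-d) + \<alpha>2*(a+1 - x)" by (simp add: \<beta>2_def d_def algebra_simps)
    then show ?thesis using e2 by simp
  qed
  have hb1: "\<alpha>1*b+\<beta>1 = a" using id2[of b] by simp
  have hb2: "\<alpha>2*b+\<beta>2 = a" using id3[of b] by simp
  have ha1: "\<alpha>1*(a-1)+\<beta>1 = a-1" using id1[of "a-1"] by simp
  have ha2: "\<alpha>2*(a+1)+\<beta>2 = a+1" using id4[of "a+1"] by simp
  have ord: "a - 1 < b" "b < a + 1" using dd abs_ge_self[of d] abs_ge_minus_self[of d] unfolding d_def by linarith+
  define h where "h x = (if x \<le> a-1 then x else if x \<le> b then \<alpha>1*x+\<beta>1 else if x \<le> a+1 then \<alpha>2*x+\<beta>2 else x)" for x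
  define v where "v x = u (h x)" for x
  define gv where "gv x = (if x \<le> a-1 then g x else if x \<le> b then \<alpha>1 * g (\<alpha>1*x+\<beta>1)
      else if x \<le> a+1 then \<alpha>2 * g (\<alpha>2*x+\<beta>2) else g x)" for x
  have mh[measurable]: "h \<in> borel_measurable borel" unfolding h_def by measurable
  have mv[measurable]: "v \<in> borel_measurable borel" unfolding v_def by measurable
  have mgv[measurable]: "gv \<in> borel_measurable borel" unfolding gv_def by measurable
  have w1: "wd_on v gv {..a-1}"
    by (rule wd_on_cong[OF wd_on_mono[OF Wu], of _ _ "{}"]) (auto simp: v_def h_def gv_def)
  have w2: "wd_on v gv {a-1..b}"
  proof (rule wd_on_cong[OF wd_on_mono[OF wd_affine[OF Wu mg a1, of \<beta>1]], of _ _ "{a-1}"])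
    show "v x = u (\<alpha>1 * x + \<beta>1)" if "x \<in> {a-1..b}" for x
      using that ha1 by (auto simp: v_def h_def)
    show "gv x = \<alpha>1 * g (\<alpha>1 * x + \<beta>1)" if "x \<in> {a-1..b}" "x \<notin> {a-1}" for x
      using that by (auto simp: gv_def)
  qed auto
  have w3: "wd_on v gv {b..a+1}"
  proof (rule wd_on_cong[OF wd_on_mono[OF wd_affine[OF Wu mg a2, of \<beta>2]], of _ _ "{b}"])
    show "v x = u (\<alpha>2 * x + \<beta>2)" if "x \<in> {b..a+1}" for x
      using that hb1 hb2 ord by (auto simp: v_def h_def)
    show "gv x = \<alpha>2 * g (\<alpha>2 * x + \<beta>2)" if "x \<in> {b..a+1}" "x \<notin> {b}" for x
      using that ord by (auto simp: gv_def)
  qed auto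
  have w4: "wd_on v gv {a+1..}"
  proof (rule wd_on_cong[OF wd_on_mono[OF Wu], of _ _ "{a+1}"])
    show "v x = u x" if "x \<in> {a+1..}" for x
      using that ha2 ord by (auto simp: v_def h_def)
    show "gv x = g x" if "x \<in> {a+1..}" "x \<notin> {a+1}" for x
      using that ord by (auto simp: gv_def)
  qed auto
  have w12: "wd_on v gv ({..a-1} \<union> {a-1..b})"
    by (rule wd_on_glue[OF w1 w2, of "a-1"]) (use ord in auto)
  have w123: "wd_on v gv (({..a-1} \<union> {a-1..b}) \<union> {b..a+1})"
    by (rule wd_on_glue[OF w12 w3, of b]) (use ord in auto)
  have w1234: "wd_on v gv ((({..a-1} \<union> {a-1..b}) \<union> {b..a+1}) \<union> {a+1..})"
    by (rule wd_on_glue[OF w123 w4, of "a+1"]) (use ord in auto)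
  have "(({..a-1} \<union> {a-1..b}) \<union> {b..a+1}) \<union> {a+1..} = (UNIV :: real set)"
    by auto
  then have Wv: "weak_deriv v gv" using w1234 mgv weak_deriv_wd_on by auto
  have move: "\<bar>h x - x\<bar> \<le> \<bar>d\<bar>" for x
  proof -
    consider "x \<le> a-1" | "a-1 < x" "x \<le> b" | "b < x" "x \<le> a+1" | "a+1 < x" by linarith
    then show ?thesis
    proof cases
      case 2
      have "h x - x = (1/(1+d))*(x-(a-1)) - (x-(a-1))"
        using 2 id1[of x] unfolding h_def \<alpha>1_def by (simp add: algebra_simps)
      moreover have "\<bar>(1/(1+d))*(x-(a-1)) - (x-(a-1))\<bar> \<le> \<bar>d\<bar>"
        by (rule hmove1) (use 2 dd in \<open>auto simp: d_def\<close>)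
      ultimately show ?thesis by simp
    next
      case 3
      have "h x - x = (1/(1-d))*(x-b) - (x-b) - d"
        using 3 id3[of x] ord unfolding h_def \<alpha>2_def d_def by (simp add: algebra_simps)
      also have "\<dots> = - ((1/(1-d))*(a+1-x) - (a+1-x))"
        using p2 unfolding d_def by (simp add: field_simps)
      finally have e: "h x - x = - ((1/(1-d))*(a+1-x) - (a+1-x))" .
      have "\<bar>(1/(1-d))*(a+1-x) - (a+1-x)\<bar> \<le> \<bar>d\<bar>"
        by (rule hmove2) (use 3 dd in \<open>auto simp: d_def\<close>)
      then show ?thesis unfolding e by simp
    qed (use ord in \<open>auto simp: h_def\<close>)
  qed
  have vout: "x \<notin> {a-1..a+1} \<Longrightarrow> v x = u x" for x using ord by (auto simp: v_def h_def)
  have v2: "integrable lborel (\<lambda>x. (v x)\<^sup>2)"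
  proof (rule Bochner_Integration.integrable_bound)
    show "integrable lborel (\<lambda>x. (u x)\<^sup>2 + indicator {a-1..a+1} x)"
      using u2 by (intro Bochner_Integration.integrable_add)
        (auto simp: integrable_indicator_iff emeasure_lborel_Icc_eq less_top[symmetric])
    show "AE x in lborel. norm ((v x)\<^sup>2) \<le> norm ((u x)\<^sup>2 + indicator {a-1..a+1} x)"
    proof (intro AE_I2)
      fix x
      have "\<bar>v x\<bar> \<le> 1" using ub unfolding v_def by simp
      then have "(v x)\<^sup>2 \<le> 1" by (simp add: abs_le_square_iff[of _ 1, simplified] power2_le_iff_abs_le)
      moreover have u0: "0 \<le> (u x)\<^sup>2" by simp
      moreover have "0 \<le> (indicator {a-1..a+1} x :: real)" by simp
      ultimately have n2: "norm ((u x)\<^sup>2 + indicator {a-1..a+1} x) = (u x)\<^sup>2 + indicator {a-1..a+1} x"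
        by simp
      show "norm ((v x)\<^sup>2) \<le> norm ((u x)\<^sup>2 + indicator {a-1..a+1} x)"
        unfolding n2
      proof (cases "x \<in> {a-1..a+1}")
        case True then show "norm ((v x)\<^sup>2) \<le> (u x)\<^sup>2 + indicator {a-1..a+1} x"
        proof -
          have "indicator {a-1..a+1} x = (1::real)" using True by simp
          then show ?thesis using \<open>(v x)\<^sup>2 \<le> 1\<close> u0 by (simp only: real_norm_def abs_of_nonneg[OF zero_le_power2])
        qed
      next
        case False then show "norm ((v x)\<^sup>2) \<le> (u x)\<^sup>2 + indicator {a-1..a+1} x"
          using vout[of x] by simp
      qed
    qed
  qed simp
  define F2 where "F2 y = indicator {a-1<..a} y * (g y)\<^sup>2" for y
  define F3 where "F3 y = indicator {a<..a+1} y * (g y)\<^sup>2" for y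
  have F2i: "integrable lborel F2" unfolding F2_def
    by (rule Bochner_Integration.integrable_bound[OF gi]) (auto simp: indicator_def)
  have F3i: "integrable lborel F3" unfolding F3_def
    by (rule Bochner_Integration.integrable_bound[OF gi]) (auto simp: indicator_def)
  have F2a: "F2 (\<alpha>1*x+\<beta>1) = indicator {a-1<..b} x * (g (\<alpha>1*x+\<beta>1))\<^sup>2" for x
  proof -
    have "(\<alpha>1*x+\<beta>1 \<in> {a-1<..a}) = (x \<in> {a-1<..b})"
      by (rule aff_mem[OF a1 id1[of x] id2[of x]])
    then show ?thesis unfolding F2_def by (simp add: indicator_def)
  qed
  have F3a: "F3 (\<alpha>2*x+\<beta>2) = indicator {b<..a+1} x * (g (\<alpha>2*x+\<beta>2))\<^sup>2" for x
  proof -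
    have "(\<alpha>2*x+\<beta>2 \<in> {a<..a+1}) = (x \<in> {b<..a+1})"
      by (rule aff_mem[OF a2 id3[of x] id4[of x]])
    then show ?thesis unfolding F3_def by (simp add: indicator_def)
  qed
  have A2: "integrable lborel (\<lambda>x. F2 (\<alpha>1*x+\<beta>1)) \<and> (\<integral>x. F2 (\<alpha>1*x+\<beta>1) \<partial>lborel) = (1/\<alpha>1) * (\<integral>x. F2 x \<partial>lborel)"
    by (rule affine_int[OF F2i a1])
  have A3: "integrable lborel (\<lambda>x. F3 (\<alpha>2*x+\<beta>2)) \<and> (\<integral>x. F3 (\<alpha>2*x+\<beta>2) \<partial>lborel) = (1/\<alpha>2) * (\<integral>x. F3 x \<partial>lborel)"
    by (rule affine_int[OF F3i a2])
  define T1 where "T1 x = indicator {..a-1} x * (g x)\<^sup>2 + indicator {a+1<..} x * (g x)\<^sup>2" for x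
  have T1i: "integrable lborel T1" unfolding T1_def
    by (intro Bochner_Integration.integrable_add;
        rule Bochner_Integration.integrable_bound[OF gi]) (auto simp: indicator_def)
  have gvpw: "(gv x)\<^sup>2 = T1 x + \<alpha>1\<^sup>2 * F2 (\<alpha>1*x+\<beta>1) + \<alpha>2\<^sup>2 * F3 (\<alpha>2*x+\<beta>2)" for x
    unfolding F2a F3a T1_def gv_def using ord by (auto simp: indicator_def power_mult_distrib)
  have gv2: "integrable lborel (\<lambda>x. (gv x)\<^sup>2)"
    unfolding gvpw using T1i A2 A3 by auto
  have "(\<integral>x. (gv x)\<^sup>2 \<partial>lborel) = (\<integral>x. T1 x \<partial>lborel) + \<alpha>1\<^sup>2 * (\<integral>x. F2 (\<alpha>1*x+\<beta>1) \<partial>lborel)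
      + \<alpha>2\<^sup>2 * (\<integral>x. F3 (\<alpha>2*x+\<beta>2) \<partial>lborel)"
    unfolding gvpw using T1i A2 A3 by simp
  also have "\<dots> = (\<integral>x. T1 x \<partial>lborel) + \<alpha>1 * (\<integral>x. F2 x \<partial>lborel) + \<alpha>2 * (\<integral>x. F3 x \<partial>lborel)"
    using A2 A3 a1 a2 by (simp add: power2_eq_square)
  also have "\<dots> = (\<integral>x. T1 x + \<alpha>1 * F2 x + \<alpha>2 * F3 x \<partial>lborel)"
    using T1i F2i F3i by simp
  also have "\<dots> \<le> (\<integral>x. (1/(1-\<bar>d\<bar>)) * (g x)\<^sup>2 \<partial>lborel)"
  proof (rule integral_mono)
    show "integrable lborel (\<lambda>x. T1 x + \<alpha>1 * F2 x + \<alpha>2 * F3 x)" using T1i F2i F3i by simp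
    show "integrable lborel (\<lambda>x. (1/(1-\<bar>d\<bar>)) * (g x)\<^sup>2)" using gi by simp
    have c1: "\<alpha>1 \<le> 1/(1-\<bar>d\<bar>)" unfolding \<alpha>1_def using dd p1 by (intro divide_left_mono) auto
    have c2: "\<alpha>2 \<le> 1/(1-\<bar>d\<bar>)" unfolding \<alpha>2_def using dd p2 by (intro divide_left_mono) auto
    have c0: "1 \<le> 1/(1-\<bar>d\<bar>)" using dd by (simp add: field_simps)
    fix x
    have m: "c \<le> 1/(1-\<bar>d\<bar>) \<Longrightarrow> c * (g x)\<^sup>2 \<le> (1/(1-\<bar>d\<bar>)) * (g x)\<^sup>2" for c
      by (rule mult_right_mono) simp_all
    consider "x \<le> a-1" | "a-1 < x" "x \<le> a" | "a < x" "x \<le> a+1" | "a+1 < x" by linarith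
    then show "T1 x + \<alpha>1 * F2 x + \<alpha>2 * F3 x \<le> (1/(1-\<bar>d\<bar>)) * (g x)\<^sup>2"
    proof cases
      case 1
      then have eq: "T1 x + \<alpha>1 * F2 x + \<alpha>2 * F3 x = 1 * (g x)\<^sup>2"
        by (auto simp: T1_def F2_def F3_def indicator_def)
      show ?thesis unfolding eq by (rule m[OF c0])
    next
      case 2
      then have eq: "T1 x + \<alpha>1 * F2 x + \<alpha>2 * F3 x = \<alpha>1 * (g x)\<^sup>2"
        by (auto simp: T1_def F2_def F3_def indicator_def)
      show ?thesis unfolding eq by (rule m[OF c1])
    next
      case 3
      then have eq: "T1 x + \<alpha>1 * F2 x + \<alpha>2 * F3 x = \<alpha>2 * (g x)\<^sup>2"
        by (auto simp: T1_def F2_def F3_def indicator_def)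
      show ?thesis unfolding eq by (rule m[OF c2])
    next
      case 4
      then have eq: "T1 x + \<alpha>1 * F2 x + \<alpha>2 * F3 x = 1 * (g x)\<^sup>2"
        by (auto simp: T1_def F2_def F3_def indicator_def)
      show ?thesis unfolding eq by (rule m[OF c0])
    qed
  qed
  also have "\<dots> = (1/(1-\<bar>d\<bar>)) * (\<integral>x. (g x)\<^sup>2 \<partial>lborel)" by simp
  finally have gvI: "(\<integral>x. (gv x)\<^sup>2 \<partial>lborel) \<le> (1/(1-\<bar>d\<bar>)) * (\<integral>x. (g x)\<^sup>2 \<partial>lborel)" .
  have vH: "v \<in> H1" unfolding H1_def using mv v2 Wv gv2 by auto
  have vb: "v b = 1" unfolding v_def h_def using ord hb1 ua by auto
  have vK: "v \<in> Kset b" unfolding Kset_def using vH vb ub by (auto simp: v_def)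
  have "(\<integral>x. (wderiv v x)\<^sup>2 \<partial>lborel) = (\<integral>x. (gv x)\<^sup>2 \<partial>lborel)" by (rule wderiv_sq_eq[OF vH Wv])
  with gvI have I: "(\<integral>x. (wderiv v x)\<^sup>2 \<partial>lborel) \<le> (1/(1-\<bar>b-a\<bar>)) * (\<integral>x. (wderiv u x)\<^sup>2 \<partial>lborel)"
    unfolding d_def g_def by simp
  have M: "\<forall>x. \<exists>y. \<bar>y - x\<bar> \<le> \<bar>b-a\<bar> \<and> v x = u y"
    using move unfolding v_def d_def by blast
  show ?thesis using vK I vout M by blast
qed

lemma tent_in_K: "(\<lambda>x. max 0 (1 - \<bar>x - a\<bar>)) \<in> Kset a"
proof -
  define T where "T x = max 0 (1 - \<bar>x - a\<bar>)" for x :: real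
  define gT where "gT x = (if a-1 < x \<and> x \<le> a then 1 else if a < x \<and> x \<le> a+1 then -1 else (0::real))" for x
  have mT[measurable]: "T \<in> borel_measurable borel" unfolding T_def by measurable
  have mgT[measurable]: "gT \<in> borel_measurable borel" unfolding gT_def by measurable
  have w1: "wd_on T gT {..a-1}"
    by (rule wd_on_cong[OF wd_on_mono[OF wd_linear[of 0 0]], of _ _ "{}"]) (auto simp: T_def gT_def)
  have w2: "wd_on T gT {a-1..a}"
    by (rule wd_on_cong[OF wd_on_mono[OF wd_linear[of 1 "1-a"]], of _ _ "{a-1}"]) (auto simp: T_def gT_def)
  have w3: "wd_on T gT {a..a+1}"
    by (rule wd_on_cong[OF wd_on_mono[OF wd_linear[of "-1" "1+a"]], of _ _ "{a}"]) (auto simp: T_def gT_def)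
  have w4: "wd_on T gT {a+1..}"
    by (rule wd_on_cong[OF wd_on_mono[OF wd_linear[of 0 0]], of _ _ "{a+1}"]) (auto simp: T_def gT_def)
  have w12: "wd_on T gT ({..a-1} \<union> {a-1..a})"
    by (rule wd_on_glue[OF w1 w2, of "a-1"]) auto
  have w123: "wd_on T gT (({..a-1} \<union> {a-1..a}) \<union> {a..a+1})"
    by (rule wd_on_glue[OF w12 w3, of a]) auto
  have w1234: "wd_on T gT ((({..a-1} \<union> {a-1..a}) \<union> {a..a+1}) \<union> {a+1..})"
    by (rule wd_on_glue[OF w123 w4, of "a+1"]) auto
  have "(({..a-1} \<union> {a-1..a}) \<union> {a..a+1}) \<union> {a+1..} = (UNIV :: real set)" by auto
  then have W: "weak_deriv T gT" using w1234 mgT weak_deriv_wd_on by auto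
  have Ii: "integrable lborel (indicat_real {a-1..a+1})"
    by (simp add: integrable_indicator_iff emeasure_lborel_Icc_eq less_top[symmetric])
  have T2: "integrable lborel (\<lambda>x. (T x)\<^sup>2)"
  proof (rule Bochner_Integration.integrable_bound[OF Ii])
    show "AE x in lborel. norm ((T x)\<^sup>2) \<le> norm (indicat_real {a-1..a+1} x)"
    proof (intro AE_I2)
      fix x
      have "0 \<le> T x" "T x \<le> 1" unfolding T_def by auto
      then have "(T x)\<^sup>2 \<le> 1" by (simp add: power_le_one)
      then show "norm ((T x)\<^sup>2) \<le> norm (indicat_real {a-1..a+1} x)"
        by (auto simp: indicator_def T_def)
    qed
  qed simp
  have gT2: "integrable lborel (\<lambda>x. (gT x)\<^sup>2)"
    by (rule Bochner_Integration.integrable_bound[OF Ii]) (auto simp: indicator_def gT_def)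
  have "T \<in> H1" unfolding H1_def using mT T2 W gT2 by auto
  moreover have "T a = 1" "\<And>x. \<bar>T x\<bar> \<le> 1" unfolding T_def by auto
  ultimately show ?thesis unfolding Kset_def T_def by auto
qed

lemma finite_bound:
  fixes M :: "real measure" and f :: "real \<Rightarrow> real"
  assumes sM: "sets M = sets borel" and fM: "finite_measure M"
    and mf: "f \<in> borel_measurable borel" and b: "\<And>x. \<bar>f x\<bar> \<le> B"
  shows "integrable M f" "\<bar>\<integral>x. f x \<partial>M\<bar> \<le> B * measure M UNIV"
proof -
  have sp: "space M = UNIV" using sets_eq_imp_space_eq[OF sM] by simp
  have mfM: "f \<in> borel_measurable M" unfolding measurable_cong_sets[OF sM refl, of borel] by (rule mf)
  show fi: "integrable M f"
    by (rule finite_measure.integrable_const_bound[OF fM _ mfM, of B]) (use b in auto)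
  have "\<bar>\<integral>x. f x \<partial>M\<bar> \<le> (\<integral>x. \<bar>f x\<bar> \<partial>M)" by (rule integral_abs_bound)
  also have "\<dots> \<le> (\<integral>x. B \<partial>M)"
    by (rule integral_mono) (use fi b finite_measure.integrable_const[OF fM] in auto)
  also have "\<dots> = B * measure M UNIV" using sp by simp
  finally show "\<bar>\<integral>x. f x \<partial>M\<bar> \<le> B * measure M UNIV" .
qed

lemma sq_le1: assumes "\<bar>y::real\<bar> \<le> 1" shows "\<bar>y * y\<bar> \<le> 1"
proof -
  have "\<bar>y\<bar> * \<bar>y\<bar> \<le> 1" by (rule mult_le_one) (use assms in auto)
  then show ?thesis by (simp add: abs_mult)
qed

context
  fixes V0 :: "real \<Rightarrow> real" and M1 M2 :: "real measure" and C c :: real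
  assumes mV0[measurable]: "V0 \<in> borel_measurable borel"
    and Cb: "AE x in lborel. \<bar>V0 x\<bar> \<le> C" and C0: "0 \<le> C"
    and cpos: "0 < c" and cV: "AE x in lborel. c \<le> V0 x"
    and s1: "sets M1 = sets borel" and s2: "sets M2 = sets borel"
    and f1: "finite_measure M1" and f2: "finite_measure M2"
begin

lemma V0_int:
  assumes mu[measurable]: "u \<in> borel_measurable borel" and u2: "integrable lborel (\<lambda>x. (u x)\<^sup>2)"
  shows "integrable lborel (\<lambda>x. V0 x * u x * u x)"
proof (rule Bochner_Integration.integrable_bound)
  show "integrable lborel (\<lambda>x. C * (u x)\<^sup>2)" using u2 by simp
  show "AE x in lborel. norm (V0 x * u x * u x) \<le> norm (C * (u x)\<^sup>2)"
    using Cb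
  proof eventually_elim
    case (elim x)
    have "norm (V0 x * u x * u x) = \<bar>V0 x\<bar> * (u x)\<^sup>2" by (simp add: abs_mult power2_eq_square)
    also have "\<dots> \<le> C * (u x)\<^sup>2" using elim by (intro mult_right_mono) auto
    also have "\<dots> = norm (C * (u x)\<^sup>2)" using C0 by simp
    finally show ?case .
  qed
qed simp

lemma Vform_lower:
  assumes uK: "u \<in> Kset a"
  shows "- measure M2 UNIV \<le> Vform V0 M1 M2 u u"
proof -
  have uH: "u \<in> H1" and ub: "\<And>x. \<bar>u x\<bar> \<le> 1" using uK unfolding Kset_def by auto
  have mu[measurable]: "u \<in> borel_measurable borel" using uH unfolding H1_def by auto
  have A: "0 \<le> (\<integral>x. V0 x * u x * u x \<partial>lborel)"
  proof (rule integral_nonneg_AE)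
    show "AE x in lborel. 0 \<le> V0 x * u x * u x"
      using cV
    proof eventually_elim
      case (elim x)
      then have "0 \<le> V0 x" using cpos by simp
      moreover have "0 \<le> u x * u x" by simp
      ultimately have "0 \<le> V0 x * (u x * u x)" by (rule mult_nonneg_nonneg)
      then show ?case by (simp add: mult.assoc)
    qed
  qed
  have B: "0 \<le> (\<integral>x. u x * u x \<partial>M1)" by (rule integral_nonneg_AE) auto
  have D: "\<bar>\<integral>x. u x * u x \<partial>M2\<bar> \<le> 1 * measure M2 UNIV"
    by (rule finite_bound(2)[OF s2 f2]) (use ub sq_le1 in auto)
  show ?thesis unfolding Vform_def using A B D by linarith
qed

lemma Ifun_lower:
  assumes uK: "u \<in> Kset a"
  shows "- measure M2 UNIV \<le> Ifun u V0 M1 M2"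
    and "(\<integral>x. (wderiv u x)\<^sup>2 \<partial>lborel) \<le> Ifun u V0 M1 M2 + measure M2 UNIV"
proof -
  have 0: "0 \<le> (\<integral>x. (wderiv u x)\<^sup>2 \<partial>lborel)" by simp
  show "- measure M2 UNIV \<le> Ifun u V0 M1 M2"
      "(\<integral>x. (wderiv u x)\<^sup>2 \<partial>lborel) \<le> Ifun u V0 M1 M2 + measure M2 UNIV"
    using Vform_lower[OF uK] 0 unfolding Ifun_def by linarith+
qed

lemma bddK: "bdd_below ((\<lambda>u. Ifun u V0 M1 M2) ` Kset a)"
  using Ifun_lower(1) by (auto simp: bdd_below_def)

lemma Ffun_le: "u \<in> Kset a \<Longrightarrow> Ffun a V0 M1 M2 \<le> Ifun u V0 M1 M2"
  unfolding Ffun_def by (rule cINF_lower[OF bddK])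

lemma Ffun_approx:
  assumes "\<eta> > 0"
  shows "\<exists>u\<in>Kset a. Ifun u V0 M1 M2 < Ffun a V0 M1 M2 + \<eta>"
proof (rule ccontr)
  assume "\<not> ?thesis"
  then have "\<And>u. u \<in> Kset a \<Longrightarrow> Ffun a V0 M1 M2 + \<eta> \<le> Ifun u V0 M1 M2" by (auto simp: not_less)
  then have "Ffun a V0 M1 M2 + \<eta> \<le> Ffun a V0 M1 M2"
    unfolding Ffun_def using tent_in_K[of a] by (intro cINF_greatest) auto
  then show False using assms by simp
qed


lemma transfer:
  assumes uK: "u \<in> Kset a" and db: "\<bar>b - a\<bar> \<le> 1/2"
    and G: "(\<integral>x. (wderiv u x)\<^sup>2 \<partial>lborel) \<le> G" and e: "\<epsilon> > 0"
  shows "Ffun b V0 M1 M2 \<le> Ifun u V0 M1 M2 + 2*\<bar>b-a\<bar>*G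
     + (G/(2*\<epsilon>) + \<epsilon>*\<bar>b-a\<bar>/2) * (4*C + 2*measure M1 UNIV + 2*measure M2 UNIV)"
proof -
  define \<omega> where "\<omega> = G/(2*\<epsilon>) + \<epsilon>*\<bar>b-a\<bar>/2"
  define m1 where "m1 = measure M1 UNIV"
  define m2 where "m2 = measure M2 UNIV"
  obtain v where vK: "v \<in> Kset b"
    and vI: "(\<integral>x. (wderiv v x)\<^sup>2 \<partial>lborel) \<le> (1/(1-\<bar>b-a\<bar>)) * (\<integral>x. (wderiv u x)\<^sup>2 \<partial>lborel)"
    and vout: "\<And>x. x \<notin> {a-1..a+1} \<Longrightarrow> v x = u x"
    and vmv: "\<And>x. \<exists>y. \<bar>y - x\<bar> \<le> \<bar>b-a\<bar> \<and> v x = u y"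
    using construct[OF uK db] by blast
  have uH: "u \<in> H1" and ub: "\<And>x. \<bar>u x\<bar> \<le> 1" using uK unfolding Kset_def by auto
  have vH: "v \<in> H1" and vb: "\<And>x. \<bar>v x\<bar> \<le> 1" using vK unfolding Kset_def by auto
  have mu[measurable]: "u \<in> borel_measurable borel" and u2: "integrable lborel (\<lambda>x. (u x)\<^sup>2)"
    using uH unfolding H1_def by auto
  have mv[measurable]: "v \<in> borel_measurable borel" and v2: "integrable lborel (\<lambda>x. (v x)\<^sup>2)"
    using vH unfolding H1_def by auto
  have Wu: "weak_deriv u (wderiv u)" and gi: "integrable lborel (\<lambda>x. (wderiv u x)\<^sup>2)"
    using wderiv_prop[OF uH] by auto
  have G0: "0 \<le> G" using G order_trans[OF integral_nonneg_AE[of "\<lambda>x. (wderiv u x)\<^sup>2" lborel]] by auto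
  have om0: "0 \<le> \<omega>" unfolding \<omega>_def using G0 e by auto
  have pw: "\<bar>v x - u x\<bar> \<le> \<omega>" for x
  proof -
    obtain y where y: "\<bar>y - x\<bar> \<le> \<bar>b-a\<bar>" "v x = u y" using vmv by blast
    have "\<bar>u y - u x\<bar> \<le> G/(2*\<epsilon>) + \<epsilon>*\<bar>y-x\<bar>/2"
    proof (cases "x \<le> y")
      case True
      then show ?thesis using holder_bound[OF Wu gi G e True] by simp
    next
      case False
      then have "\<bar>u x - u y\<bar> \<le> G/(2*\<epsilon>) + \<epsilon>*(x-y)/2" using holder_bound[OF Wu gi G e, of y x] by simp
      then show ?thesis using False by (simp add: abs_minus_commute)
    qed
    also have "\<dots> \<le> \<omega>" unfolding \<omega>_def using y(1) e by (simp add: mult_left_mono)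
    finally show ?thesis using y(2) by simp
  qed
  have pw2: "\<bar>v x * v x - u x * u x\<bar> \<le> 2 * \<omega>" for x
  proof -
    have "\<bar>v x * v x - u x * u x\<bar> = \<bar>v x - u x\<bar> * \<bar>v x + u x\<bar>"
      by (simp add: abs_mult[symmetric] algebra_simps)
    also have "\<dots> \<le> \<omega> * 2"
    proof (rule mult_mono)
      show "\<bar>v x + u x\<bar> \<le> 2" using vb[of x] ub[of x] by linarith
    qed (use pw om0 in auto)
    finally show ?thesis by simp
  qed
  have dI: "(\<integral>x. (wderiv v x)\<^sup>2 \<partial>lborel) \<le> (\<integral>x. (wderiv u x)\<^sup>2 \<partial>lborel) + 2*\<bar>b-a\<bar>*G"
  proof -
    define X where "X = (\<integral>x. (wderiv u x)\<^sup>2 \<partial>lborel)"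
    define t where "t = \<bar>b-a\<bar>"
    have X0: "0 \<le> X" unfolding X_def by simp
    have XG: "X \<le> G" using G unfolding X_def .
    have t: "0 \<le> t" "t \<le> 1/2" using db unfolding t_def by auto
    have "(1/(1-t)) * X = X + (t/(1-t)) * X" using t by (simp add: field_simps)
    also have "(t/(1-t)) * X \<le> (2*t) * X"
    proof (rule mult_right_mono)
      have "0 \<le> t*(1-2*t)" using t by (intro mult_nonneg_nonneg) auto
      then show "t/(1-t) \<le> 2*t" using t by (simp add: divide_le_eq algebra_simps)
    qed (use X0 in auto)
    also have "(2*t) * X \<le> 2*t*G" using XG t by (simp add: mult_left_mono)
    finally have "(1/(1-t)) * X \<le> X + 2*t*G" by simp
    then show ?thesis using vI unfolding X_def t_def by simp
  qed
  have Vi: "integrable lborel (\<lambda>x. V0 x * v x * v x)" "integrable lborel (\<lambda>x. V0 x * u x * u x)"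
    using V0_int[OF mv v2] V0_int[OF mu u2] by auto
  have Ii: "integrable lborel (indicat_real {a-1..a+1})"
    by (simp add: integrable_indicator_iff emeasure_lborel_Icc_eq less_top[symmetric])
  have VI: "(\<integral>x. V0 x * v x * v x \<partial>lborel) - (\<integral>x. V0 x * u x * u x \<partial>lborel) \<le> 4 * C * \<omega>"
  proof -
    have "(\<integral>x. V0 x * v x * v x \<partial>lborel) - (\<integral>x. V0 x * u x * u x \<partial>lborel)
        = (\<integral>x. V0 x * v x * v x - V0 x * u x * u x \<partial>lborel)"
      using Vi by simp
    also have "\<dots> \<le> (\<integral>x. (2 * C * \<omega>) * indicat_real {a-1..a+1} x \<partial>lborel)"
    proof (rule integral_mono_AE)
      show "integrable lborel (\<lambda>x. V0 x * v x * v x - V0 x * u x * u x)" using Vi by simp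
      show "integrable lborel (\<lambda>x. (2 * C * \<omega>) * indicat_real {a-1..a+1} x)" using Ii by simp
      show "AE x in lborel. V0 x * v x * v x - V0 x * u x * u x \<le> (2 * C * \<omega>) * indicat_real {a-1..a+1} x"
        using Cb
      proof eventually_elim
        case (elim x)
        show ?case
        proof (cases "x \<in> {a-1..a+1}")
          case False then show ?thesis using vout[of x] by simp
        next
          case True
          have "V0 x * v x * v x - V0 x * u x * u x \<le> \<bar>V0 x\<bar> * \<bar>v x * v x - u x * u x\<bar>"
            by (simp add: abs_mult[symmetric] algebra_simps)
          also have "\<dots> \<le> C * (2 * \<omega>)" by (rule mult_mono) (use elim pw2 C0 in auto)
          finally show ?thesis using True by simp
        qed
      qed
    qed
    also have "\<dots> = 4 * C * \<omega>" by (simp add: measure_lborel_Icc)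
    finally show ?thesis .
  qed
  have MI: "\<bar>(\<integral>x. v x * v x \<partial>M) - (\<integral>x. u x * u x \<partial>M)\<bar> \<le> 2 * \<omega> * measure M UNIV"
    if sM: "sets M = sets borel" and fM: "finite_measure M" for M
  proof -
    have i1: "integrable M (\<lambda>x. v x * v x)" by (rule finite_bound(1)[OF sM fM]) (use vb sq_le1 in auto)
    have i2: "integrable M (\<lambda>x. u x * u x)" by (rule finite_bound(1)[OF sM fM]) (use ub sq_le1 in auto)
    have "(\<integral>x. v x * v x \<partial>M) - (\<integral>x. u x * u x \<partial>M) = (\<integral>x. v x * v x - u x * u x \<partial>M)"
      using i1 i2 by simp
    moreover have "\<bar>\<integral>x. v x * v x - u x * u x \<partial>M\<bar> \<le> 2 * \<omega> * measure M UNIV"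
      by (rule finite_bound(2)[OF sM fM]) (use pw2 in auto)
    ultimately show ?thesis by simp
  qed
  have M1I: "(\<integral>x. v x * v x \<partial>M1) - (\<integral>x. u x * u x \<partial>M1) \<le> 2 * \<omega> * m1"
    using MI[OF s1 f1] unfolding m1_def by linarith
  have M2I: "(\<integral>x. u x * u x \<partial>M2) - (\<integral>x. v x * v x \<partial>M2) \<le> 2 * \<omega> * m2"
    using MI[OF s2 f2] unfolding m2_def by linarith
  have "Ifun v V0 M1 M2 \<le> Ifun u V0 M1 M2 + 2*\<bar>b-a\<bar>*G + \<omega> * (4*C + 2*m1 + 2*m2)"
    unfolding Ifun_def Vform_def using dI VI M1I M2I by (simp add: algebra_simps)
  then show ?thesis using Ffun_le[OF vK] unfolding \<omega>_def m1_def m2_def by linarith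
qed

end

lemma small_choice:
  fixes G K \<eta> :: real
  assumes G0: "0 \<le> G" and K0: "0 \<le> K" and e: "0 < \<eta>"
  shows "\<exists>\<epsilon>>0. \<exists>\<delta>>0. \<delta> \<le> 1/2 \<and> (\<forall>t. 0 \<le> t \<longrightarrow> t \<le> \<delta> \<longrightarrow> 2*t*G + (G/(2*\<epsilon>) + \<epsilon>*t/2) * K < \<eta>)"
proof -
  define \<epsilon> where "\<epsilon> = G*K/\<eta> + 1"
  have GK: "0 \<le> G*K" using G0 K0 by simp
  have "0 \<le> G*K/\<eta>" using GK e by simp
  then have ep: "\<epsilon> > 0" unfolding \<epsilon>_def by linarith
  have A: "G/(2*\<epsilon>) * K < \<eta>/2"
  proof -
    have "G/(2*\<epsilon>) * K = (G*K) / (2*\<epsilon>)" by simp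
    also have "\<dots> < \<eta>/2"
    proof -
      have "G*K < \<eta> * \<epsilon>" unfolding \<epsilon>_def using e GK by (simp add: field_simps)
      then show ?thesis using ep e by (simp add: field_simps)
    qed
    finally show ?thesis .
  qed
  define B where "B = 2*G + \<epsilon>*K/2"
  have B0: "0 \<le> B" unfolding B_def using G0 K0 ep by auto
  define \<delta> where "\<delta> = min (1/2) (\<eta>/(4*(B+1)))"
  have dp: "\<delta> > 0" unfolding \<delta>_def using e B0 by auto
  have dB: "\<delta> * B < \<eta>/4"
  proof -
    have "\<delta> * B \<le> (\<eta>/(4*(B+1))) * B" unfolding \<delta>_def using B0 by (intro mult_right_mono) auto
    also have "\<dots> < \<eta>/4" using B0 e by (simp add: field_simps)
    finally show ?thesis .
  qed
  have dl: "\<delta> \<le> 1/2" unfolding \<delta>_def by (rule min.cobounded1)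
  have sm: "\<forall>t. 0 \<le> t \<longrightarrow> t \<le> \<delta> \<longrightarrow> 2*t*G + (G/(2*\<epsilon>) + \<epsilon>*t/2) * K < \<eta>"
  proof (intro allI impI)
    fix t :: real assume t: "0 \<le> t" "t \<le> \<delta>"
    have "2*t*G + (G/(2*\<epsilon>) + \<epsilon>*t/2) * K = t * B + G/(2*\<epsilon>) * K" unfolding B_def by (simp add: algebra_simps)
    also have "t * B \<le> \<delta> * B" using t B0 by (intro mult_right_mono) auto
    finally show "2*t*G + (G/(2*\<epsilon>) + \<epsilon>*t/2) * K < \<eta>" using A dB e by linarith
  qed
  show ?thesis using ep dp dl sm by blast
qed

context
  fixes V0 :: "real \<Rightarrow> real" and M1 M2 :: "real measure" and C c :: real
  assumes mV0[measurable]: "V0 \<in> borel_measurable borel"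
    and Cb: "AE x in lborel. \<bar>V0 x\<bar> \<le> C" and C0: "0 \<le> C"
    and cpos: "0 < c" and cV: "AE x in lborel. c \<le> V0 x"
    and s1: "sets M1 = sets borel" and s2: "sets M2 = sets borel"
    and f1: "finite_measure M1" and f2: "finite_measure M2"
begin

lemmas tr = transfer[OF mV0 Cb C0 cpos cV s1 s2 f1 f2]
lemmas apx = Ffun_approx[OF mV0 Cb C0 cpos cV s1 s2 f1 f2]
lemmas ilow = Ifun_lower[OF mV0 Cb C0 cpos cV s1 s2 f1 f2]

lemma Ffun_lower: "- measure M2 UNIV \<le> Ffun a V0 M1 M2"
  unfolding Ffun_def using tent_in_K[of a] ilow(1) by (intro cINF_greatest) auto

lemma Fcont: "continuous_on UNIV (\<lambda>a. Ffun a V0 M1 M2)"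
proof (rule continuous_at_imp_continuous_on, intro ballI)
  fix a :: real
  define F where "F x = Ffun x V0 M1 M2" for x
  define K where "K = 4*C + 2*measure M1 UNIV + 2*measure M2 UNIV"
  define m2 where "m2 = measure M2 UNIV"
  have K0: "0 \<le> K" unfolding K_def using C0 by (simp add: measure_nonneg add_nonneg_nonneg)
  have m20: "0 \<le> m2" unfolding m2_def by (simp add: measure_nonneg)
  have "isCont F a"
    unfolding continuous_at_eps_delta
  proof (intro allI impI)
    fix \<eta> :: real assume "\<eta> > 0"
    define \<eta>' where "\<eta>' = min \<eta> 1"
    have e': "0 < \<eta>'" "\<eta>' \<le> 1" "\<eta>' \<le> \<eta>" unfolding \<eta>'_def using \<open>\<eta> > 0\<close> by auto
    obtain u where uK: "u \<in> Kset a" and uI: "Ifun u V0 M1 M2 < F a + \<eta>'/2"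
      using apx[of "\<eta>'/2" a] e' unfolding F_def by auto
    define G1 where "G1 = F a + \<eta>'/2 + m2"
    have uG: "(\<integral>x. (wderiv u x)\<^sup>2 \<partial>lborel) \<le> G1"
      using ilow(2)[OF uK] uI unfolding G1_def m2_def by linarith
    have G10: "0 \<le> G1" using Ffun_lower[of a] e' unfolding G1_def F_def m2_def by linarith
    obtain \<epsilon>1 \<delta>1 where ep1: "\<epsilon>1 > 0" "\<delta>1 > 0" "\<delta>1 \<le> 1/2"
      and sm1: "\<And>t. 0 \<le> t \<Longrightarrow> t \<le> \<delta>1 \<Longrightarrow> 2*t*G1 + (G1/(2*\<epsilon>1) + \<epsilon>1*t/2) * K < \<eta>'/2"
      using small_choice[OF G10 K0, of "\<eta>'/2"] e' by auto
    define G2 where "G2 = F a + 2 + m2"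
    have G20: "0 \<le> G2" using Ffun_lower[of a] unfolding G2_def F_def m2_def by linarith
    obtain \<epsilon>2 \<delta>2 where ep2: "\<epsilon>2 > 0" "\<delta>2 > 0" "\<delta>2 \<le> 1/2"
      and sm2: "\<And>t. 0 \<le> t \<Longrightarrow> t \<le> \<delta>2 \<Longrightarrow> 2*t*G2 + (G2/(2*\<epsilon>2) + \<epsilon>2*t/2) * K < \<eta>'/2"
      using small_choice[OF G20 K0, of "\<eta>'/2"] e' by auto
    show "\<exists>\<delta>>0. \<forall>x'. dist x' a < \<delta> \<longrightarrow> dist (F x') (F a) < \<eta>"
    proof (intro exI[of _ "min \<delta>1 \<delta>2"] conjI allI impI)
      show "0 < min \<delta>1 \<delta>2" using ep1 ep2 by simp
      fix b assume "dist b a < min \<delta>1 \<delta>2"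
      then have bd: "\<bar>b - a\<bar> < \<delta>1" "\<bar>b - a\<bar> < \<delta>2" by (auto simp: dist_real_def)
      have up: "F b < F a + \<eta>'"
      proof -
        have "F b \<le> Ifun u V0 M1 M2 + 2*\<bar>b-a\<bar>*G1 + (G1/(2*\<epsilon>1) + \<epsilon>1*\<bar>b-a\<bar>/2) * K"
          unfolding F_def K_def by (rule tr[OF uK _ uG ep1(1)]) (use bd ep1 in linarith)
        moreover have "2*\<bar>b-a\<bar>*G1 + (G1/(2*\<epsilon>1) + \<epsilon>1*\<bar>b-a\<bar>/2) * K < \<eta>'/2"
          using sm1[of "\<bar>b-a\<bar>"] bd by simp
        ultimately show ?thesis using uI by linarith
      qed
      obtain w where wK: "w \<in> Kset b" and wI: "Ifun w V0 M1 M2 < F b + \<eta>'/2"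
        using apx[of "\<eta>'/2" b] e' unfolding F_def by auto
      have wG: "(\<integral>x. (wderiv w x)\<^sup>2 \<partial>lborel) \<le> G2"
        using ilow(2)[OF wK] wI up e' unfolding G2_def m2_def by linarith
      have low: "F a < F b + \<eta>'"
      proof -
        have "F a \<le> Ifun w V0 M1 M2 + 2*\<bar>a-b\<bar>*G2 + (G2/(2*\<epsilon>2) + \<epsilon>2*\<bar>a-b\<bar>/2) * K"
          unfolding F_def K_def by (rule tr[OF wK _ wG ep2(1)]) (use bd ep2 in \<open>simp add: abs_minus_commute\<close>)
        moreover have "2*\<bar>a-b\<bar>*G2 + (G2/(2*\<epsilon>2) + \<epsilon>2*\<bar>a-b\<bar>/2) * K < \<eta>'/2"
          using sm2[of "\<bar>a-b\<bar>"] bd by (simp add: abs_minus_commute)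
        ultimately show ?thesis using wI by linarith
      qed
      show "dist (F b) (F a) < \<eta>" using up low e' by (simp add: dist_real_def abs_less_iff)
    qed
  qed
  then show "isCont (\<lambda>a. Ffun a V0 M1 M2) a" unfolding F_def .
qed

end

theorem theorem5p5:
  fixes V0 :: "real \<Rightarrow> real" and M1 M2 :: "real measure"
  assumes "V0 \<in> borel_measurable borel"
    and "\<exists>C. AE x in lborel. \<bar>V0 x\<bar> \<le> C"
    and "\<exists>c>0. AE x in lborel. c \<le> V0 x"
    and "sets M1 = sets borel" and "sets M2 = sets borel"
    and "finite_measure M1" and "finite_measure M2"
  shows "continuous_on UNIV (\<lambda>a. Ffun a V0 M1 M2)"
proof -
  obtain C where C: "AE x in lborel. \<bar>V0 x\<bar> \<le> C" using assms(2) by blast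
  have C': "AE x in lborel. \<bar>V0 x\<bar> \<le> max C 0" using C by eventually_elim auto
  obtain c where c: "c > 0" "AE x in lborel. c \<le> V0 x" using assms(3) by blast
  show ?thesis
    by (rule Fcont[OF assms(1) C' _ c(1) c(2) assms(4-7)]) simp
qed

end
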